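(* Let $\ell\ge2$ be an integer and $A,B\in\mathbb C$. Define $\tilde e_0,\dots,\tilde e_{\ell-1}$ by $\ell\tilde e_0=A$, $(\ell-1)\tilde e_1=-(A^2/\ell^2-B)$, and $$(\ell-(k+1))\tilde e_{k+1}=-\sum_{t=0}^k\tilde e_t\tilde e_{k-t},\qquad 1\le k\le\ell-2 .$$ Then $$q_\ell:=-\sum_{t=0}^{\ell-1}\tilde e_t\tilde e_{\ell-1-t}=\frac{(-1)^\ell}{(\ell!)^2}\prod_{j=0}^{\ell}\bigl(A-(\ell-2j)B^{1/2}\bigr),$$ where the right-hand side is independent of the choice of square root $B^{1/2}$ (it is a polynomial in $A,B$). *)

theory Defs
  imports Complex_Main
begin

end

theory Submission
  imports Defs "HOL-Computational_Algebra.Formal_Power_Series"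
begin

lemma ident_aux:
  fixes V F X L S a :: "complex fps"
  shows "X * (fps_deriv (fps_deriv V) + fps_deriv F * V + F * fps_deriv V) - L * (fps_deriv V + F * V) - (2*S) * (X * (fps_deriv V + F * V)) - X * (F * (fps_deriv V + F * V))
   = (X * fps_deriv (fps_deriv V) - L * fps_deriv V - (2*S) * (X * fps_deriv V) + (L * S - a) * V)
    + (X * fps_deriv F - L * (F+S) + a - X * ((F+S) * (F+S)) + (S*S) * X) * V"
  by (simp add: algebra_simps power2_eq_square)

fun dd :: "nat \<Rightarrow> complex \<Rightarrow> complex \<Rightarrow> nat \<Rightarrow> complex" where
  "dd l A s 0 = 1"
| "dd l A s (Suc n) = (A - of_int (int l - 2 * int n) * s) * dd l A s n
      / (of_nat (Suc n) * of_int (int n - int l))"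

lemma dd_rec:
  assumes "m \<noteq> l"
  shows "of_nat (Suc m) * of_int (int m - int l) * dd l A s (Suc m)
       = (A - of_int (int l - 2 * int m) * s) * dd l A s m"
proof -
  define D where "D = (of_nat (Suc m) * of_int (int m - int l) :: complex)"
  define X where "X = (A - of_int (int l - 2 * int m) * s) * dd l A s m"
  have ne1: "(of_nat (Suc m) :: complex) \<noteq> 0" by (metis of_nat_eq_0_iff nat.distinct(1))
  have ne2: "(of_int (int m - int l) :: complex) \<noteq> 0" using assms by simp
  have D0: "D \<noteq> 0" unfolding D_def using ne1 ne2 by simp
  have "dd l A s (Suc m) = X / D" unfolding X_def D_def by (simp only: dd.simps)
  then have "D * dd l A s (Suc m) = X" using D0 by simp
  then show ?thesis unfolding D_def X_def by simp
qed

lemma dd_closed: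
  "n \<le> l \<Longrightarrow> dd l A s n * (\<Prod>j<n. of_nat (Suc j) * of_int (int j - int l))
     = (\<Prod>j<n. (A - of_int (int l - 2 * int j) * s))"
proof (induction n)
  case 0
  then show ?case by simp
next
  case (Suc n)
  then have IH: "dd l A s n * (\<Prod>j<n. of_nat (Suc j) * of_int (int j - int l))
     = (\<Prod>j<n. (A - of_int (int l - 2 * int j) * s))" by simp
  have ne: "n \<noteq> l" using Suc.prems by simp
  have "dd l A s (Suc n) * (\<Prod>j<Suc n. of_nat (Suc j) * of_int (int j - int l))
     = (dd l A s (Suc n) * (of_nat (Suc n) * of_int (int n - int l))) *
        (\<Prod>j<n. of_nat (Suc j) * of_int (int j - int l))"
    by (simp only: prod.lessThan_Suc ac_simps)
  also have "dd l A s (Suc n) * (of_nat (Suc n) * of_int (int n - int l))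
      = (A - of_int (int l - 2 * int n) * s) * dd l A s n"
    using dd_rec[OF ne, of A s] by (simp only: ac_simps)
  finally have "dd l A s (Suc n) * (\<Prod>j<Suc n. of_nat (Suc j) * of_int (int j - int l))
     = (A - of_int (int l - 2 * int n) * s) * (dd l A s n * (\<Prod>j<n. of_nat (Suc j) * of_int (int j - int l)))"
    by (simp only: mult.assoc)
  also have "\<dots> = (A - of_int (int l - 2 * int n) * s) * (\<Prod>j<n. (A - of_int (int l - 2 * int j) * s))"
    by (simp only: IH)
  also have "\<dots> = (\<Prod>j<Suc n. (A - of_int (int l - 2 * int j) * s))"
    by (simp only: prod.lessThan_Suc mult.commute)
  finally show ?case .
qed

lemma denom_prod:
  "(\<Prod>j<l. (of_nat (Suc j) * of_int (int j - int l) :: complex)) = (-1)^l * (fact l)^2"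
proof -
  have a: "(\<Prod>j<l. (1 + of_nat j :: complex)) = fact l"
    by (simp add: pochhammer_fact pochhammer_prod atLeast0LessThan)
  have "(\<Prod>j<l. (of_nat j - of_nat l :: complex)) = pochhammer (- of_nat l) l"
    by (simp add: pochhammer_prod atLeast0LessThan)
  also have "\<dots> = (-1)^l * fact l"
    by (simp add: pochhammer_minus pochhammer_fact)
  finally have b: "(\<Prod>j<l. (of_nat j - of_nat l :: complex)) = (-1)^l * fact l" .
  show ?thesis by (simp add: prod.distrib a b power2_eq_square)
qed

lemma LV_coeff:
  fixes d :: "nat \<Rightarrow> complex"
  shows "fps_nth (fps_X * fps_deriv (fps_deriv (Abs_fps d)) - fps_const (of_nat l) * fps_deriv (Abs_fps d) -
       2 * fps_const s * (fps_X * fps_deriv (Abs_fps d)) +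
       (fps_const (of_nat l) * fps_const s - fps_const A) * Abs_fps d) m =
   of_nat (Suc m) * of_int (int m - int l) * d (Suc m) -
     (A - of_int (int l - 2 * int m) * s) * d m"
proof -
  have t2: "2 * fps_const s = fps_const (2*s)"
    by (metis fps_const_mult fps_numeral_fps_const)
  show ?thesis unfolding t2
    by (cases m) (simp_all add: ring_distribs)
qed

lemma H_coeff:
  fixes G F :: "complex fps"
  shows "fps_nth (fps_X * fps_deriv G - fps_const (of_nat l) * G - 2 * fps_const s * (fps_X * G) - fps_X * (F * G)) m
   = (of_nat m - of_nat l) * fps_nth G m
      - (if m = 0 then 0 else 2 * s * fps_nth G (m-1) + fps_nth (F*G) (m-1))"
proof -
  have t2: "2 * fps_const s = fps_const (2*s)"
    by (metis fps_const_mult fps_numeral_fps_const)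
  have "fps_nth (fps_X * fps_deriv G - fps_const (of_nat l) * G - fps_const (2*s) * (fps_X * G) - fps_X * (F * G)) m
   = (of_nat m - of_nat l) * fps_nth G m
      - (if m = 0 then 0 else 2 * s * fps_nth G (m-1) + fps_nth (F*G) (m-1))"
  proof (cases m)
    case 0 then show ?thesis by simp
  next
    case (Suc k) then show ?thesis by (simp add: ring_distribs)
  qed
  then show ?thesis unfolding t2 .
qed

theorem lemma3p3:
  fixes l :: nat and A B s :: complex and e :: "nat \<Rightarrow> complex"
  assumes "l \<ge> 2"
    and "of_nat l * e 0 = A"
    and "of_nat (l - 1) * e 1 = - (A^2 / (of_nat l)^2 - B)"
    and "\<And>k. 1 \<le> k \<Longrightarrow> k \<le> l - 2 \<Longrightarrow>
           of_nat (l - (k + 1)) * e (k + 1) = - (\<Sum>t = 0..k. e t * e (k - t))"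
    and "s^2 = B"
  shows "- (\<Sum>t = 0..l - 1. e t * e (l - 1 - t))
         = (-1)^l / (fact l)^2 * (\<Prod>j = 0..l. (A - of_int (int l - 2 * int j) * s))"
proof -
  define q where "q = - (\<Sum>t = 0..l - 1. e t * e (l - 1 - t))"
  define d where "d = dd l A s"
  define E where "E = Abs_fps (\<lambda>k. if k < l then e k else 0)"
  define S where "S = fps_const s"
  define L where "L = fps_const (of_nat l :: complex)"
  define a where "a = fps_const A"
  define F where "F = E - S"
  define V where "V = Abs_fps d"
  define G where "G = fps_deriv V + F * V"
  define R where "R = fps_X * fps_deriv E - L * E + a - fps_X * (E * E) + (S*S) * fps_X"
  define LV where "LV = fps_X * fps_deriv (fps_deriv V) - L * fps_deriv V - (2*S) * (fps_X * fps_deriv V) + (L * S - a) * V"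
  define H where "H = fps_X * fps_deriv G - L * G - (2*S) * (fps_X * G) - fps_X * (F * G)"
  have l0: "l \<noteq> 0" using assms(1) by simp
  have HI: "H = LV + R * V"
  proof -
    have "fps_deriv G = fps_deriv (fps_deriv V) + fps_deriv F * V + F * fps_deriv V"
      by (simp add: G_def)
    moreover have EF: "E = F + S" by (simp add: F_def)
    moreover have dE: "fps_deriv E = fps_deriv F" by (simp add: F_def S_def)
    ultimately show ?thesis
      unfolding H_def LV_def R_def dE by (simp only: EF G_def ident_aux)
  qed
  have S2: "2 * S = fps_const (2*s)"
    by (metis S_def fps_const_mult fps_numeral_fps_const)
  have En: "(fps_nth E k) = (if k < l then e k else 0)" for k by (simp add: E_def)
  have SS: "S * S = fps_const (s*s)" by (simp add: S_def)
  have Rn: "(fps_nth R m) = (if m = 0 then 0 else of_nat m * (fps_nth E m)) - of_nat l * (fps_nth E m) + (if m = 0 then A else 0)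
     - (if m = 0 then 0 else (fps_nth (E*E) (m-1))) + (if m = 1 then s*s else 0)" for m
    by (cases m) (auto simp: R_def L_def a_def SS)
  have EE: "(fps_nth (E*E) m) = (\<Sum>t = 0..m. e t * e (m - t))" if "m \<le> l - 1" for m
    unfolding fps_mult_nth using that l0 by (intro sum.cong) (auto simp: En)
  have Rz: "(fps_nth R m) = 0" if "m < l" for m
  proof (cases m)
    case 0
    then show ?thesis using assms(2) by (simp add: Rn En l0)
  next
    case (Suc m')
    show ?thesis
    proof (cases m')
      case 0
      have e0: "e 0 = A / of_nat l" using assms(2) l0 by (simp add: field_simps)
      have "A^2 / (of_nat l)^2 = e 0 * e 0" using e0 by (simp add: power2_eq_square)
      moreover have "(of_nat (l - 1) :: complex) = of_nat l - 1" using l0 by (simp add: of_nat_diff)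
      ultimately have "(of_nat l - 1) * e 1 = - (e 0 * e 0 - s*s)"
        using assms(3) assms(5) by (simp add: power2_eq_square)
      then show ?thesis using Suc 0 that l0 by (simp add: Rn En EE algebra_simps)
    next
      case (Suc k)
      have h: "of_nat (l - (k + 1 + 1)) * e (k + 1 + 1) = - (\<Sum>t = 0..k+1. e t * e (k + 1 - t))"
        using assms(4)[of "k+1"] that \<open>m = Suc m'\<close> Suc by simp
      have "(of_nat (l - (k + 1 + 1)) :: complex) = of_nat l - of_nat k - 2"
        using that \<open>m = Suc m'\<close> Suc by (simp add: of_nat_diff)
      with h have h2: "(of_nat l - of_nat k - 2) * e (k + 2) = - (\<Sum>t = 0..k+1. e t * e (k + 1 - t))"
        by (simp add: numeral_2_eq_2)
      have "(fps_nth (E*E) (k+1)) = (\<Sum>t = 0..k+1. e t * e (k + 1 - t))"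
        using that \<open>m = Suc m'\<close> Suc by (intro EE) simp
      then show ?thesis using h2 that \<open>m = Suc m'\<close> Suc
        by (simp add: Rn En algebra_simps numeral_2_eq_2)
    qed
  qed
  have Rl: "(fps_nth R l) = q"
    using assms(1) by (simp add: Rn En EE q_def)
  have d0: "fps_nth V 0 = 1" by (simp add: V_def d_def)
  have RV: "(fps_nth (R*V) m) = (if m = l then q else 0)" if "m \<le> l" for m
  proof -
    have "(fps_nth (R*V) m) = (\<Sum>i\<in>{0..m}. (if i = l then q * (fps_nth V (m-i)) else 0))"
      unfolding fps_mult_nth using that Rz Rl
      by (intro sum.cong) auto
    also have "\<dots> = (if m = l then q else 0)"
      using that d0 by (simp add: sum.delta')
    finally show ?thesis .
  qed
  have LVn: "fps_nth LV m = of_nat (Suc m) * of_int (int m - int l) * d (Suc m)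
      - (A - of_int (int l - 2 * int m) * s) * d m" for m
    unfolding LV_def V_def L_def a_def S_def by (rule LV_coeff)
  have LVz: "fps_nth LV m = 0" if "m \<noteq> l" for m
    using LVn[of m] dd_rec[OF that, of A s] by (simp add: d_def)
  have LVl: "fps_nth LV l = - (A + of_nat l * s) * d l"
    using LVn[of l] by (simp add: algebra_simps)
  have Hn: "fps_nth H m = (of_nat m - of_nat l) * fps_nth G m
      - (if m = 0 then 0 else 2 * s * fps_nth G (m-1) + fps_nth (F*G) (m-1))" for m
    unfolding H_def L_def S_def by (rule H_coeff)
  have HV: "fps_nth H m = 0" if "m < l" for m
    using that by (simp add: HI LVz RV)
  have Gz: "m < l \<Longrightarrow> fps_nth G m = 0" for m
  proof (induction m rule: less_induct)
    case (less m)
    have prev: "fps_nth G j = 0" if "j < m" for j using less that by simp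
    have FG: "m \<noteq> 0 \<Longrightarrow> fps_nth (F*G) (m-1) = 0"
      unfolding fps_mult_nth by (intro sum.neutral) (auto simp: prev)
    have "(of_nat m - of_nat l) * fps_nth G m = 0"
      using HV[OF less.prems] Hn[of m] FG prev[of "m-1"] by (cases "m = 0") auto
    moreover have "(of_nat m - of_nat l :: complex) \<noteq> 0" using less.prems by simp
    ultimately show ?case by simp
  qed
  have FGl: "fps_nth (F*G) (l-1) = 0"
    unfolding fps_mult_nth using l0 by (intro sum.neutral) (auto intro!: Gz)
  have "fps_nth H l = 0" using Hn[of l] l0 FGl Gz[of "l-1"] by simp
  then have qd: "q = (A + of_nat l * s) * d l"
    using LVl RV[of l] by (simp add: HI algebra_simps add_eq_0_iff)
  have dl: "d l * ((-1)^l * (fact l)^2) = (\<Prod>j<l. (A - of_int (int l - 2 * int j) * s))"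
    using dd_closed[of l l A s] denom_prod[of l] by (simp add: d_def)
  have P: "(\<Prod>j = 0..l. (A - of_int (int l - 2 * int j) * s))
      = (\<Prod>j<l. (A - of_int (int l - 2 * int j) * s)) * (A + of_nat l * s)"
    by (simp add: atLeast0AtMost lessThan_Suc_atMost[symmetric] prod.lessThan_Suc)
  have fne: "(fact l :: complex) \<noteq> 0" by simp
  have "d l = (-1)^l / (fact l)^2 * (\<Prod>j<l. (A - of_int (int l - 2 * int j) * s))"
  proof -
    define P where "P = (\<Prod>j<l. (A - of_int (int l - 2 * int j) * s))"
    define f where "f = (fact l :: complex)^2"
    have f0: "f \<noteq> 0" using fne by (simp add: f_def)
    have m1: "(-1::complex)^l * (-1)^l = 1" by (simp flip: power_mult_distrib)
    have "(-1)^l * (d l * ((-1)^l * f)) = (-1)^l * P" using dl by (simp add: P_def f_def)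
    moreover have "(-1)^l * (d l * ((-1)^l * f)) = d l * f * ((-1::complex)^l * (-1)^l)"
      by (simp only: ac_simps)
    ultimately have "d l * f = (-1)^l * P" using m1 by simp
    then have "d l = (-1)^l * P / f" using f0 by (simp add: field_simps)
    then show ?thesis by (simp add: P_def f_def)
  qed
  then show ?thesis
    unfolding q_def[symmetric] qd P by (simp only: ac_simps)
qed

end
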